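(* (i) For integers $r\geq1$, $k_1\geq2$, $k_2,\ldots,k_r\geq1$, \[ \lim_{m\to\infty}\zeta^{\star}(k_1,\ldots,k_r,\{2\}^m)=\sum_{n_1\geq\cdots\geq n_r\geq1}\frac{2}{n_1^{k_1}\cdots n_{r-1}^{k_{r-1}}\,n_r^{k_r-1}(n_r+1)}. \] (ii) For every integer $p\geq2$, \[ \lim_{m\to\infty}\zeta^{\star}(\{p\}^m)=\prod_{n\geq2}\frac{1}{1-n^{-p}}. \]
   Context: $\zeta^{\star}(k_1,\ldots,k_r)=\sum_{n_1\geq\cdots\geq n_r\geq 1}\frac{1}{n_1^{k_1}\cdots n_r^{k_r}}$ for $k_1\geq2$, $k_2,\ldots,k_r\geq1$; $\{p\}^m$ denotes $m$ consecutive arguments equal to $p$. *)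

theory Defs
  imports "HOL-Analysis.Analysis"
begin

definition zs_index :: "nat \<Rightarrow> nat list set" where
  "zs_index r = {ns. length ns = r \<and> sorted_wrt (\<ge>) ns \<and> (\<forall>n\<in>set ns. 1 \<le> n)}"

text \<open>Multiple zeta-star value zeta*(k_1,...,k_r) (meaningful for k_1 \<ge> 2, k_i \<ge> 1).\<close>
definition zeta_star :: "nat list \<Rightarrow> real" where
  "zeta_star ks = (\<Sum>\<^sub>\<infinity>ns\<in>zs_index (length ks). \<Prod>i<length ks. 1 / real (ns ! i) ^ (ks ! i))"

end

theory Submission
  imports Defs
begin

definition Cset :: "nat \<Rightarrow> nat \<Rightarrow> nat list set" where
  "Cset r N = {ns. length ns = r \<and> sorted_wrt (\<ge>) ns \<and> (\<forall>n\<in>set ns. 1 \<le> n \<and> n \<le> N)}"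

definition Tm :: "nat list \<Rightarrow> nat list \<Rightarrow> real" where
  "Tm ks ns = (\<Prod>i<length ks. 1 / real (ns ! i) ^ (ks ! i))"

fun FF :: "nat list \<Rightarrow> (nat \<Rightarrow> real) \<Rightarrow> nat \<Rightarrow> real" where
  "FF [] \<phi> N = \<phi> N"
| "FF (k#ks) \<phi> N = (\<Sum>n\<in>{1..N}. 1 / real n ^ k * FF ks \<phi> n)"

lemma Cset_finite: "finite (Cset r N)"
proof -
  have "Cset r N \<subseteq> {xs. set xs \<subseteq> {1..N} \<and> length xs = r}"
    unfolding Cset_def by auto
  then show ?thesis using finite_lists_length_eq[of "{1..N}" r] finite_subset by blast
qed

lemma Cset_0: "Cset 0 N = {[]}" unfolding Cset_def by auto

lemma Cset_Suc: "Cset (Suc r) N = (\<lambda>(n,ts). n#ts) ` (SIGMA n:{1..N}. Cset r n)"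
proof (rule set_eqI)
  fix xs
  show "xs \<in> Cset (Suc r) N \<longleftrightarrow> xs \<in> (\<lambda>(n,ts). n#ts) ` (SIGMA n:{1..N}. Cset r n)"
  proof
    assume "xs \<in> Cset (Suc r) N"
    then obtain n ts where xs: "xs = n # ts" unfolding Cset_def by (cases xs) auto
    with \<open>xs \<in> Cset (Suc r) N\<close> have "(n, ts) \<in> (SIGMA n:{1..N}. Cset r n)"
      unfolding Cset_def using le_trans by fastforce
    then show "xs \<in> (\<lambda>(n,ts). n#ts) ` (SIGMA n:{1..N}. Cset r n)" using xs by force
  next
    assume "xs \<in> (\<lambda>(n,ts). n#ts) ` (SIGMA n:{1..N}. Cset r n)"
    then show "xs \<in> Cset (Suc r) N" unfolding Cset_def using le_trans by fastforce
  qed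
qed

lemma Tm_Cons: "Tm (k#ks) (n#ns) = 1 / real n ^ k * Tm ks ns"
  unfolding Tm_def length_Cons prod.lessThan_Suc_shift by simp

lemma FF_sum: "FF ks \<phi> N = (\<Sum>ns\<in>Cset (length ks) N. Tm ks ns * \<phi> (last (N#ns)))"
proof (induction ks arbitrary: N)
  case Nil
  then show ?case by (simp add: Cset_0 Tm_def)
next
  case (Cons k ks)
  have inj: "inj_on (\<lambda>(n,ts). n#ts) (SIGMA n:{1..N}. Cset (length ks) n)"
    by (auto simp: inj_on_def)
  have "(\<Sum>ns\<in>Cset (length (k#ks)) N. Tm (k#ks) ns * \<phi> (last (N#ns)))
      = (\<Sum>(n,ts)\<in>(SIGMA n:{1..N}. Cset (length ks) n). Tm (k#ks) (n#ts) * \<phi> (last (N#n#ts)))"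
    unfolding length_Cons Cset_Suc sum.reindex[OF inj] by (simp add: case_prod_beta)
  also have "\<dots> = (\<Sum>n\<in>{1..N}. \<Sum>ts\<in>Cset (length ks) n. 1 / real n ^ k * (Tm ks ts * \<phi> (last (n#ts))))"
    by (subst sum.Sigma[symmetric]) (auto simp: Cset_finite Tm_Cons)
  also have "\<dots> = FF (k#ks) \<phi> N"
    by (simp add: Cons sum_distrib_left)
  finally show ?case ..
qed

lemma Cset_sub: "Cset r N \<subseteq> zs_index r"
  unfolding Cset_def zs_index_def by auto

lemma Cset_mono: "N \<le> M \<Longrightarrow> Cset r N \<subseteq> Cset r M"
  unfolding Cset_def by auto

lemma finite_in_Cset:
  assumes "finite F" "F \<subseteq> zs_index r"
  shows "F \<subseteq> Cset r (\<Sum>xs\<in>F. sum_list xs)"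
proof
  fix xs assume xs: "xs \<in> F"
  have "sum_list xs \<le> (\<Sum>xs\<in>F. sum_list xs)"
    using xs assms(1) by (intro member_le_sum) auto
  moreover have "\<forall>n\<in>set xs. n \<le> sum_list xs" by (auto intro: member_le_sum_list)
  ultimately show "xs \<in> Cset r (\<Sum>xs\<in>F. sum_list xs)"
    using xs assms(2) unfolding Cset_def zs_index_def by fastforce
qed

lemma G1:
  fixes f :: "nat list \<Rightarrow> real"
  assumes nn: "\<And>x. x \<in> zs_index r \<Longrightarrow> 0 \<le> f x"
    and bd: "\<And>N. sum f (Cset r N) \<le> B"
  shows "f summable_on zs_index r" "infsum f (zs_index r) \<le> B"
    "sum f (Cset r N) \<le> infsum f (zs_index r)"
proof -
  have fin: "sum f F \<le> B" if "finite F" "F \<subseteq> zs_index r" for F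
  proof -
    have "sum f F \<le> sum f (Cset r (\<Sum>xs\<in>F. sum_list xs))"
      using finite_in_Cset[OF that] Cset_sub[of r] nn
      by (intro sum_mono2) (auto simp: Cset_finite)
    also have "\<dots> \<le> B" by (rule bd)
    finally show ?thesis .
  qed
  show sm: "f summable_on zs_index r"
    using fin by (intro nonneg_bdd_above_summable_on nn) (auto simp: bdd_above_def)
  show "infsum f (zs_index r) \<le> B"
    using fin by (intro infsum_le_finite_sums sm)
  show "sum f (Cset r N) \<le> infsum f (zs_index r)"
    using Cset_sub[of r] nn by (intro finite_sum_le_infsum sm) (auto simp: Cset_finite)
qed

lemma G2:
  fixes f :: "nat list \<Rightarrow> real"
  assumes nn: "\<And>x. x \<in> zs_index r \<Longrightarrow> 0 \<le> f x"
    and bd: "\<And>N. sum f (Cset r N) \<le> B"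
  shows "(\<lambda>N. sum f (Cset r N)) \<longlonglongrightarrow> infsum f (zs_index r)"
proof -
  have inc: "incseq (\<lambda>N. sum f (Cset r N))"
    using Cset_sub[of r] nn Cset_mono[of _ _ r] by (intro incseq_SucI sum_mono2) (auto simp: Cset_finite)
  obtain L where L: "(\<lambda>N. sum f (Cset r N)) \<longlonglongrightarrow> L" "\<forall>N. sum f (Cset r N) \<le> L"
    using incseq_convergent[OF inc, of B] bd by blast
  have "infsum f (zs_index r) \<le> L" using G1(2)[of r f L] nn L(2) by blast
  moreover have "L \<le> infsum f (zs_index r)"
    using G1(3)[OF nn bd] by (intro LIMSEQ_le_const2[OF L(1)]) auto
  ultimately show ?thesis using L(1) by simp
qed

lemma FF_app: "FF (ks @ js) \<phi> N = FF ks (FF js \<phi>) N"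
  by (induction ks arbitrary: N) auto

lemma FF_nonneg: "(\<And>n. 0 \<le> \<phi> n) \<Longrightarrow> 0 \<le> FF ks \<phi> N"
  by (induction ks arbitrary: N) (auto intro!: sum_nonneg)

lemma FF_mono: "(\<And>n. \<phi> n \<le> \<psi> n) \<Longrightarrow> FF ks \<phi> N \<le> FF ks \<psi> N"
  by (induction ks arbitrary: N) (auto intro!: sum_mono divide_right_mono)

lemma FF_tendsto:
  assumes "\<And>n. 1 \<le> n \<Longrightarrow> (\<lambda>m. \<phi>m m n) \<longlonglongrightarrow> \<phi> n" "1 \<le> N"
  shows "(\<lambda>m. FF ks (\<phi>m m) N) \<longlonglongrightarrow> FF ks \<phi> N"
  using assms(2)
proof (induction ks arbitrary: N)
  case Nil
  then show ?case using assms(1) by simp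
next
  case (Cons k ks)
  show ?case unfolding FF.simps
    by (intro tendsto_sum tendsto_mult_left Cons.IH) auto
qed

definition LL :: "nat \<Rightarrow> nat \<Rightarrow> real" where
  "LL p N = (\<Prod>n\<in>{2..N}. 1 / (1 - 1 / real n ^ p))"

abbreviation HH :: "nat \<Rightarrow> nat \<Rightarrow> nat \<Rightarrow> real" where
  "HH p m N \<equiv> FF (replicate m p) (\<lambda>_. 1) N"

lemma H_rec: "FF (replicate (Suc m) p) \<phi> (Suc N)
   = FF (replicate (Suc m) p) \<phi> N + 1 / real (Suc N) ^ p * FF (replicate m p) \<phi> (Suc N)"
  by (simp add: sum.cl_ivl_Suc)

lemma LL_1: "LL p 1 = 1" unfolding LL_def by simp
lemma LL_1': "LL p (Suc 0) = 1" unfolding LL_def by simp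

lemma LL_Suc: "1 \<le> N \<Longrightarrow> LL p (Suc N) = LL p N / (1 - 1 / real (Suc N) ^ p)"
  unfolding LL_def by (simp add: prod.cl_ivl_Suc)

lemma LL_ge1: "1 \<le> p \<Longrightarrow> 1 \<le> LL p N"
  unfolding LL_def
proof (intro prod_ge_1)
  fix n assume p: "1 \<le> p" and n: "n \<in> {2..N}"
  have "1 < real n ^ p" using n p by (intro one_less_power) auto
  then have "0 < 1 / real n ^ p" "1 / real n ^ p < 1" using n by (simp_all add: divide_less_eq)
  then show "1 \<le> 1 / (1 - 1 / real n ^ p)" by (simp add: field_simps)
qed

lemma LL_sum:
  assumes p: "1 \<le> p" and N: "1 \<le> N"
  shows "(\<Sum>n\<in>{1..N}. 1 / real n ^ p * LL p n) = LL p N"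
  using N
proof (induction N rule: nat_induct_at_least)
  case base
  then show ?case by (simp add: LL_1)
next
  case (Suc N)
  have "1 < real (Suc N) ^ p" using Suc p by (intro one_less_power) auto
  then have ne: "1 - 1 / real (Suc N) ^ p \<noteq> 0" by auto
  have "(\<Sum>n\<in>{1..Suc N}. 1 / real n ^ p * LL p n) = LL p N + 1 / real (Suc N) ^ p * LL p (Suc N)"
    using Suc by (simp add: sum.cl_ivl_Suc)
  also have "\<dots> = LL p (Suc N)"
    using ne by (simp add: LL_Suc[OF Suc(1)] field_simps)
  finally show ?case .
qed

lemma H_le: "1 \<le> p \<Longrightarrow> HH p m N \<le> LL p N"
proof (induction m arbitrary: N)
  case 0
  then show ?case using LL_ge1 by simp
next
  case (Suc m)
  show ?case
  proof (cases "N = 0")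
    case True
    then show ?thesis using LL_ge1[OF Suc(2), of 0] by simp
  next
    case False
    have "HH p (Suc m) N = (\<Sum>n\<in>{1..N}. 1 / real n ^ p * HH p m n)" by simp
    also have "\<dots> \<le> (\<Sum>n\<in>{1..N}. 1 / real n ^ p * LL p n)"
      using Suc by (intro sum_mono mult_left_mono) auto
    also have "\<dots> = LL p N" using LL_sum[OF Suc(2)] False by simp
    finally show ?thesis .
  qed
qed

lemma H_mono: "1 \<le> N \<Longrightarrow> HH p m N \<le> HH p (Suc m) N"
proof (induction m arbitrary: N)
  case 0
  have "(1::real) = 1 / real 1 ^ p" by simp
  also have "\<dots> \<le> (\<Sum>n\<in>{1..N}. 1 / real n ^ p)"
    using 0 by (intro member_le_sum[of 1 "{1..N}" "\<lambda>n. 1 / real n ^ p"]) auto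
  finally show ?case by simp
next
  case (Suc m)
  have "HH p (Suc m) N = (\<Sum>n\<in>{1..N}. 1 / real n ^ p * HH p m n)" by simp
  also have "\<dots> \<le> (\<Sum>n\<in>{1..N}. 1 / real n ^ p * HH p (Suc m) n)"
    using Suc by (intro sum_mono mult_left_mono) auto
  also have "\<dots> = HH p (Suc (Suc m)) N" by simp
  finally show ?case .
qed

lemma H_1: "HH p m 1 = 1"
  by (induction m) auto

lemma H_lim:
  assumes p: "1 \<le> p" and N: "1 \<le> N"
  shows "(\<lambda>m. HH p m N) \<longlonglongrightarrow> LL p N"
  using N
proof (induction N rule: nat_induct_at_least)
  case base
  have "(\<lambda>m. HH p m 1) = (\<lambda>m. 1)" using H_1 by auto
  then show ?case using LL_1 by (metis tendsto_const)
next
  case (Suc N)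
  define c where "c = 1 / real (Suc N) ^ p"
  have "1 < real (Suc N) ^ p" using Suc p by (intro one_less_power) auto
  then have c1: "c \<noteq> 1" unfolding c_def by auto
  have inc: "incseq (\<lambda>m. HH p m (Suc N))"
    by (intro incseq_SucI H_mono) auto
  obtain X where X: "(\<lambda>m. HH p m (Suc N)) \<longlonglongrightarrow> X"
    using incseq_convergent[OF inc, of "LL p (Suc N)"] H_le[OF p] by blast
  have "(\<lambda>m. HH p (Suc m) (Suc N)) \<longlonglongrightarrow> X" using X by (rule LIMSEQ_Suc)
  moreover have "(\<lambda>m. HH p (Suc m) (Suc N)) = (\<lambda>m. HH p (Suc m) N + c * HH p m (Suc N))"
    unfolding c_def by (rule ext, rule H_rec)
  moreover have "(\<lambda>m. HH p (Suc m) N + c * HH p m (Suc N)) \<longlonglongrightarrow> LL p N + c * X"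
    by (intro tendsto_add tendsto_mult_left X LIMSEQ_Suc[OF Suc(2)])
  ultimately have "X = LL p N + c * X" using LIMSEQ_unique by metis
  then have "X = LL p N / (1 - c)" using c1 by (simp add: field_simps)
  then have "X = LL p (Suc N)" using LL_Suc[OF Suc(1)] c_def by simp
  then show ?case using X by simp
qed

lemma LL_mono_p:
  assumes p: "2 \<le> p" shows "LL p N \<le> LL 2 N"
  unfolding LL_def
proof (intro prod_mono conjI)
  fix n assume n: "n \<in> {2..N}"
  have n1: "1 \<le> real n" using n by auto
  have a: "real n ^ 2 \<le> real n ^ p" using n1 p by (intro power_increasing) auto
  have b: "1 < real n ^ 2" using n by (intro one_less_power) auto
  have c: "0 < real n ^ p" using n1 by simp
  have "1 / real n ^ p \<le> 1 / real n ^ 2" using a b c by (intro divide_left_mono) auto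
  moreover have "1 / real n ^ 2 < 1" using b by (simp add: divide_less_eq)
  moreover have "0 \<le> 1 / real n ^ p" by simp
  ultimately show "0 \<le> 1 / (1 - 1 / real n ^ p)" "1 / (1 - 1 / real n ^ p) \<le> 1 / (1 - 1 / real n ^ 2)"
    by (auto intro!: divide_left_mono)
qed

lemma LL2: "1 \<le> N \<Longrightarrow> LL 2 N = 2 * real N / (real N + 1)"
proof (induction N rule: nat_induct_at_least)
  case base
  then show ?case by (simp add: LL_1')
next
  case (Suc N)
  have "LL 2 (Suc N) = 2 * real N / (real N + 1) / (1 - 1 / (real N + 1) ^ 2)"
    using LL_Suc[OF Suc(1), of 2] Suc(2) by simp
  also have "\<dots> = 2 * (real N + 1) / (real N + 2)"
  proof -
    define x where "x = real N"
    have x: "0 < x" using Suc(1) x_def by simp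
    have e: "1 - 1 / (x + 1) ^ 2 = x * (x + 2) / (x + 1) ^ 2"
    proof -
      have y: "(x + 1) ^ 2 \<noteq> 0" using x by simp
      have "1 - 1 / (x + 1) ^ 2 = ((x + 1) ^ 2 - 1) / (x + 1) ^ 2"
        using y by (simp add: diff_divide_distrib)
      also have "(x + 1) ^ 2 - 1 = x * (x + 2)" by (simp add: power2_eq_square algebra_simps)
      finally show ?thesis .
    qed
    have "2 * x / (x + 1) / (1 - 1 / (x + 1) ^ 2) = 2 * x / (x + 1) * ((x + 1) ^ 2 / (x * (x + 2)))"
      unfolding e by simp
    also have "\<dots> = 2 * (x + 1) / (x + 2)"
    proof -
      have nz: "x \<noteq> 0" "x + 2 \<noteq> 0" "x + 1 \<noteq> 0" using x by auto
      show ?thesis using nz by (simp add: divide_simps power2_eq_square)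
    qed
    finally show ?thesis unfolding x_def .
  qed
  finally show ?case by (simp add: algebra_simps)
qed

lemma LL2_le: "LL 2 N \<le> 2"
proof (cases "N = 0")
  case True then show ?thesis unfolding LL_def by simp
next
  case False then show ?thesis by (simp add: LL2 field_simps)
qed

lemma LLp_le: "2 \<le> p \<Longrightarrow> LL p N \<le> 2"
  using LL_mono_p LL2_le order_trans by blast

lemma sqrt_step: "2 * sqrt (real N) + 1 / sqrt (real (Suc N)) \<le> 2 * sqrt (real (Suc N))"
proof -
  define a where "a = sqrt (real N)"
  define b where "b = sqrt (real (Suc N))"
  have b0: "0 < b" unfolding b_def by simp
  have ab: "b^2 = a^2 + 1" unfolding a_def b_def by simp
  have "0 \<le> (a - b)^2" by simp
  then have "2 * a * b \<le> a^2 + b^2" by (simp add: power2_diff)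
  then have "2 * a * b + 1 \<le> 2 * b^2" using ab by simp
  moreover have "(2 * a + 1 / b) * b = 2 * a * b + 1" using b0 by (simp add: field_simps)
  ultimately have "(2 * a + 1 / b) * b \<le> (2 * b) * b" by (simp add: power2_eq_square)
  then have "2 * a + 1 / b \<le> 2 * b" using b0 by (simp add: mult_le_cancel_right)
  then show ?thesis unfolding a_def b_def .
qed

lemma sum_isqrt: "(\<Sum>n\<in>{1..N}. 1 / sqrt (real n)) \<le> 2 * sqrt (real N)"
proof (induction N)
  case 0 then show ?case by simp
next
  case (Suc N)
  have "(\<Sum>n\<in>{1..Suc N}. 1 / sqrt (real n)) = (\<Sum>n\<in>{1..N}. 1 / sqrt (real n)) + 1 / sqrt (real (Suc N))"
    by (simp add: sum.cl_ivl_Suc)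
  also have "\<dots> \<le> 2 * sqrt (real N) + 1 / sqrt (real (Suc N))" using Suc by simp
  also have "\<dots> \<le> 2 * sqrt (real (Suc N))" by (rule sqrt_step)
  finally show ?case .
qed

lemma FF_sqrt:
  assumes ks: "\<forall>k\<in>set ks. 1 \<le> k" and \<phi>: "\<And>n. 0 \<le> \<phi> n \<and> \<phi> n \<le> 2" and N: "1 \<le> N"
  shows "FF ks \<phi> N \<le> 2 ^ (length ks + 1) * sqrt (real N)"
  using ks N
proof (induction ks arbitrary: N)
  case Nil
  have "\<phi> N \<le> 2" using \<phi> by blast
  also have "2 \<le> 2 * sqrt (real N)" using Nil by simp
  finally show ?case by simp
next
  case (Cons k ks)
  have "FF (k#ks) \<phi> N = (\<Sum>n\<in>{1..N}. 1 / real n ^ k * FF ks \<phi> n)" by simp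
  also have "\<dots> \<le> (\<Sum>n\<in>{1..N}. 2 ^ (length ks + 1) * (1 / sqrt (real n)))"
  proof (intro sum_mono)
    fix n assume n: "n \<in> {1..N}"
    have k: "1 \<le> k" using Cons by simp
    have "1 / real n ^ k * FF ks \<phi> n \<le> 1 / real n ^ k * (2 ^ (length ks + 1) * sqrt (real n))"
      using n Cons by (intro mult_left_mono Cons.IH) auto
    also have "\<dots> \<le> 1 / real n * (2 ^ (length ks + 1) * sqrt (real n))"
    proof (intro mult_right_mono)
      have "real n ^ 1 \<le> real n ^ k" using n k by (intro power_increasing) auto
      then show "1 / real n ^ k \<le> 1 / real n" using n by (intro divide_left_mono) auto
    qed simp
    also have "\<dots> = 2 ^ (length ks + 1) * (1 / sqrt (real n))"
      using n by (simp add: field_simps)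
    finally show "1 / real n ^ k * FF ks \<phi> n \<le> 2 ^ (length ks + 1) * (1 / sqrt (real n))" .
  qed
  also have "\<dots> = 2 ^ (length ks + 1) * (\<Sum>n\<in>{1..N}. 1 / sqrt (real n))"
    by (simp add: sum_distrib_left)
  also have "\<dots> \<le> 2 ^ (length ks + 1) * (2 * sqrt (real N))"
    by (intro mult_left_mono sum_isqrt) simp
  finally show ?case by simp
qed

lemma powr_32: "0 < x \<Longrightarrow> (x::real) powr (-3/2) = sqrt x / x ^ 2"
proof -
  assume x: "0 < x"
  have "x powr (-3/2) = x powr (1/2 + (-2))" by simp
  also have "\<dots> = x powr (1/2) * x powr (-2)" by (rule powr_add)
  also have "\<dots> = sqrt x * inverse (x powr 2)" using x by (simp add: powr_half_sqrt powr_minus)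
  also have "\<dots> = sqrt x / x ^ 2" using x by (simp add: divide_inverse)
  finally show ?thesis .
qed

lemma FF_bound:
  assumes k: "2 \<le> k" and ks: "\<forall>k\<in>set ks. 1 \<le> k" and \<phi>: "\<And>n. 0 \<le> \<phi> n \<and> \<phi> n \<le> 2"
  shows "FF (k#ks) \<phi> N \<le> 2 ^ (length ks + 1) * suminf (\<lambda>n. real n powr (-3/2))"
proof -
  define C :: real where "C = 2 ^ (length ks + 1)"
  have sm: "summable (\<lambda>n. real n powr (-3/2))" by (simp add: summable_real_powr_iff)
  have "FF (k#ks) \<phi> N = (\<Sum>n\<in>{1..N}. 1 / real n ^ k * FF ks \<phi> n)" by simp
  also have "\<dots> \<le> (\<Sum>n\<in>{1..N}. C * real n powr (-3/2))"
  proof (intro sum_mono)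
    fix n assume n: "n \<in> {1..N}"
    then have n0: "0 < real n" by simp
    have "1 / real n ^ k * FF ks \<phi> n \<le> 1 / real n ^ k * (C * sqrt (real n))"
      unfolding C_def using n by (intro mult_left_mono FF_sqrt ks \<phi>) auto
    also have "\<dots> \<le> 1 / real n ^ 2 * (C * sqrt (real n))"
    proof (intro mult_right_mono)
      have "real n ^ 2 \<le> real n ^ k" using n k by (intro power_increasing) auto
      then show "1 / real n ^ k \<le> 1 / real n ^ 2" using n0 by (intro divide_left_mono) auto
    qed (simp add: C_def)
    also have "\<dots> = C * real n powr (-3/2)" unfolding powr_32[OF n0] by simp
    finally show "1 / real n ^ k * FF ks \<phi> n \<le> C * real n powr (-3/2)" .
  qed
  also have "\<dots> = C * (\<Sum>n\<in>{1..N}. real n powr (-3/2))" by (simp add: sum_distrib_left)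
  also have "\<dots> \<le> C * suminf (\<lambda>n. real n powr (-3/2))"
    by (intro mult_left_mono sum_le_suminf sm) (auto simp: C_def)
  finally show ?thesis unfolding C_def .
qed

lemma limit_combine:
  fixes z :: "nat \<Rightarrow> real" and a :: "nat \<Rightarrow> nat \<Rightarrow> real"
  assumes az: "\<And>m N. a m N \<le> z m" and zB: "\<And>m. z m \<le> B" and b: "b \<longlonglongrightarrow> B"
    and ab: "\<And>N. (\<lambda>m. a m N) \<longlonglongrightarrow> b N"
  shows "z \<longlonglongrightarrow> B"
proof (rule LIMSEQ_I)
  fix r :: real assume r: "0 < r"
  obtain N where N: "norm (b N - B) < r / 2" using LIMSEQ_D[OF b, of "r/2"] r by auto
  obtain M where M: "\<And>m. m \<ge> M \<Longrightarrow> norm (a m N - b N) < r / 2"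
    using LIMSEQ_D[OF ab[of N], of "r/2"] r by auto
  show "\<exists>M. \<forall>m\<ge>M. norm (z m - B) < r"
  proof (intro exI allI impI)
    fix m assume "M \<le> m"
    then have "norm (a m N - b N) < r / 2" by (rule M)
    then have "\<bar>a m N - b N\<bar> < r / 2" "\<bar>b N - B\<bar> < r / 2" using N by auto
    then have "B - r < a m N" by linarith
    then show "norm (z m - B) < r" using az[of m N] zB[of m] r by auto
  qed
qed

lemma Tm_nonneg: "0 \<le> Tm ks ns"
  unfolding Tm_def by (intro prod_nonneg) auto

lemma sum_Tm_FF: "sum (Tm ks) (Cset (length ks) N) = FF ks (\<lambda>_. 1) N"
  by (simp add: FF_sum)

lemma zeta_Tm: "zeta_star ks = infsum (Tm ks) (zs_index (length ks))"
  unfolding zeta_star_def Tm_def by simp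

lemma part2:
  assumes p: "2 \<le> p"
  shows "(\<lambda>m. zeta_star (replicate m p)) \<longlonglongrightarrow> (\<Prod>n. 1 / (1 - 1 / real (n + 2) ^ p))"
proof -
  define f where "f i = 1 / (1 - 1 / real (i + 2) ^ p)" for i
  have p1: "1 \<le> p" using p by simp
  have LLinc: "incseq (LL p)"
  proof (intro incseq_SucI)
    fix N
    show "LL p N \<le> LL p (Suc N)"
    proof (cases "Suc N < 2")
      case True then show ?thesis unfolding LL_def by (simp add: prod.cl_ivl_Suc)
    next
      case False
      have "1 < real (Suc N) ^ p" using False p by (intro one_less_power) auto
      then have "1 \<le> 1 / (1 - 1 / real (Suc N) ^ p)"
        by (simp add: field_simps)
      moreover have "0 \<le> LL p N" using LL_ge1[OF p1, of N] by simp
      ultimately have "LL p N * 1 \<le> LL p N * (1 / (1 - 1 / real (Suc N) ^ p))"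
        by (intro mult_left_mono) auto
      then show ?thesis using False unfolding LL_def by (simp add: prod.cl_ivl_Suc)
    qed
  qed
  have P: "(\<Prod>i\<le>n. f i) = LL p (n + 2)" for n
  proof -
    have "LL p (n + 2) = (\<Prod>i\<in>{0+2..n+2}. 1 / (1 - 1 / real i ^ p))" unfolding LL_def by (simp only: add.left_neutral)
    also have "\<dots> = (\<Prod>i\<in>{0..n}. f i)" unfolding f_def by (rule prod.shift_bounds_cl_nat_ivl)
    finally show ?thesis by (simp add: atMost_atLeast0)
  qed
  have inc2: "incseq (\<lambda>n. LL p (n + 2))" using LLinc unfolding incseq_def by simp
  obtain L where L: "(\<lambda>n. LL p (n + 2)) \<longlonglongrightarrow> L" "\<forall>n. LL p (n + 2) \<le> L"
    using incseq_convergent[OF inc2, of 2] LLp_le[OF p] by blast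
  have h1: "LL p (0 + 2) \<le> L" using L(2) by blast
  have h2: "1 \<le> LL p (0 + 2)" using LL_ge1[OF p1] by blast
  from h1 h2 have "L \<noteq> 0" by linarith
  have fnz: "f i \<noteq> 0" for i
  proof -
    have "1 < real (i + 2) ^ p" using p by (intro one_less_power) auto
    then show ?thesis unfolding f_def by simp
  qed
  have cp: "convergent_prod f"
    using L(1) \<open>L \<noteq> 0\<close> unfolding convergent_prod_iff_nz_lim[OF fnz] P by blast
  have lim2: "(\<lambda>n. LL p (n + 2)) \<longlonglongrightarrow> prodinf f"
    using convergent_prod_LIMSEQ[OF cp] unfolding P .
  have limL: "LL p \<longlonglongrightarrow> prodinf f" using LIMSEQ_offset[OF lim2] .
  have LLle: "LL p N \<le> prodinf f" for N using incseq_le[OF LLinc limL] .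
  have eqz: "zeta_star (replicate m p) = infsum (Tm (replicate m p)) (zs_index m)" for m
    using zeta_Tm[of "replicate m p"] by simp
  have sumH: "sum (Tm (replicate m p)) (Cset m N) = HH p m N" for m N
    using sum_Tm_FF[of "replicate m p" N] by simp
  have goal: "(\<lambda>m. zeta_star (replicate m p)) \<longlonglongrightarrow> prodinf f"
  proof (rule limit_combine[where a = "\<lambda>m N. HH p m (Suc N)" and b = "\<lambda>N. LL p (Suc N)"])
    fix m N
    show "HH p m (Suc N) \<le> zeta_star (replicate m p)"
      unfolding eqz sumH[symmetric]
      by (rule G1(3)[where B = 2]) (auto simp: Tm_nonneg sumH intro: order_trans[OF H_le[OF p1] LLp_le[OF p]])
  next
    fix m
    show "zeta_star (replicate m p) \<le> prodinf f"
      unfolding eqz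
      by (rule G1(2)) (auto simp: Tm_nonneg sumH intro: order_trans[OF H_le[OF p1] LLle])
  next
    show "(\<lambda>N. LL p (Suc N)) \<longlonglongrightarrow> prodinf f" using limL by (rule LIMSEQ_Suc)
  next
    fix N
    show "(\<lambda>m. HH p m (Suc N)) \<longlonglongrightarrow> LL p (Suc N)" by (rule H_lim[OF p1]) simp
  qed
  then show ?thesis unfolding f_def .
qed

lemma Req:
  assumes ks: "ks \<noteq> []" and ks1: "\<forall>k\<in>set ks. 1 \<le> k" and ns: "ns \<in> Cset (length ks) N"
  shows "Tm ks ns * LL 2 (last (N#ns))
    = 2 / ((\<Prod>i<length ks - 1. real (ns ! i) ^ (ks ! i))
                     * real (last ns) ^ (last ks - 1) * (real (last ns) + 1))"
proof -
  obtain r where r: "length ks = Suc r" using ks by (cases ks) auto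
  have lns: "length ns = Suc r" using ns r unfolding Cset_def by simp
  then have nsne: "ns \<noteq> []" by auto
  define l where "l = last ns"
  define kl where "kl = last ks"
  have l_eq: "l = ns ! r" unfolding l_def using lns nsne by (simp add: last_conv_nth)
  have kl_eq: "kl = ks ! r" unfolding kl_def using r ks by (simp add: last_conv_nth)
  have l1: "1 \<le> l" using ns nsne unfolding Cset_def l_def by auto
  have kl1: "1 \<le> kl" using ks1 ks unfolding kl_def by auto
  define P where "P = (\<Prod>i<r. real (ns ! i) ^ (ks ! i))"
  have "Tm ks ns = (\<Prod>i<r. 1 / real (ns ! i) ^ (ks ! i)) * (1 / real l ^ kl)"
    unfolding Tm_def r l_eq kl_eq by simp
  also have "(\<Prod>i<r. 1 / real (ns ! i) ^ (ks ! i)) = 1 / P"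
    unfolding P_def by (simp add: prod_dividef)
  finally have T: "Tm ks ns = 1 / P * (1 / real l ^ kl)" .
  have LLl: "LL 2 (last (N#ns)) = 2 * real l / (real l + 1)"
    using nsne l1 by (simp add: l_def LL2)
  have pw: "real l ^ kl = real l ^ (kl - 1) * real l"
    using kl1 by (metis Suc_diff_1 less_le_trans zero_less_one power_Suc2)
  have l0: "0 < real l" using l1 by simp
  have "Tm ks ns * LL 2 (last (N#ns)) = 2 / (P * real l ^ (kl - 1) * (real l + 1))"
  proof (cases "P = 0")
    case True then show ?thesis unfolding T LLl pw by simp
  next
    case False
    have q: "real l ^ (kl - 1) \<noteq> 0" using l0 by simp
    show ?thesis unfolding T LLl pw using l0 q False by (simp add: divide_simps)
  qed
  then show ?thesis using r unfolding P_def l_def kl_def by simp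
qed

lemma part1:
  assumes ne: "ks \<noteq> []" and hd2: "2 \<le> hd ks" and ks1: "\<forall>k\<in>set ks. 1 \<le> k"
  shows "(\<lambda>m. zeta_star (ks @ replicate m 2)) \<longlonglongrightarrow>
             (\<Sum>\<^sub>\<infinity>ns\<in>zs_index (length ks).
                2 / ((\<Prod>i<length ks - 1. real (ns ! i) ^ (ks ! i))
                     * real (last ns) ^ (last ks - 1) * (real (last ns) + 1)))"
proof -
  obtain k ks' where kks: "ks = k # ks'" using ne by (cases ks) auto
  define R where "R ns = 2 / ((\<Prod>i<length ks - 1. real (ns ! i) ^ (ks ! i))
                     * real (last ns) ^ (last ks - 1) * (real (last ns) + 1))" for ns
  define Bd where "Bd = 2 ^ (length ks' + 1) * suminf (\<lambda>n. real n powr (-3/2))"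
  define r where "r = length ks"
  have LLb: "\<And>n. 0 \<le> LL 2 n \<and> LL 2 n \<le> 2" using LL_ge1[of 2] LL2_le
    by (metis dual_order.trans one_le_numeral zero_le_one)
  have bBd: "FF ks (LL 2) N \<le> Bd" for N
    unfolding kks Bd_def using hd2 ks1 kks by (intro FF_bound LLb) auto
  have bsum: "FF ks (LL 2) N = sum R (Cset r N)" for N
    unfolding FF_sum r_def R_def by (intro sum.cong refl Req ne ks1) simp
  have Rnn: "0 \<le> R ns" for ns
    unfolding R_def by (intro divide_nonneg_nonneg mult_nonneg_nonneg prod_nonneg) auto
  have Rbd: "sum R (Cset r N) \<le> Bd" for N using bBd bsum by metis
  have blim: "(\<lambda>N. FF ks (LL 2) N) \<longlonglongrightarrow> infsum R (zs_index r)"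
    unfolding bsum using G2[OF Rnn Rbd] .
  have ble: "FF ks (LL 2) N \<le> infsum R (zs_index r)" for N
    unfolding bsum using G1(3)[OF Rnn Rbd] .
  have eqz: "zeta_star (ks @ replicate m 2) = infsum (Tm (ks @ replicate m 2)) (zs_index (r + m))" for m
    using zeta_Tm[of "ks @ replicate m 2"] unfolding r_def by simp
  have suma: "sum (Tm (ks @ replicate m 2)) (Cset (r + m) N) = FF ks (HH 2 m) N" for m N
    using sum_Tm_FF[of "ks @ replicate m 2" N] unfolding r_def by (simp add: FF_app)
  have ab: "FF ks (HH 2 m) N \<le> FF ks (LL 2) N" for m N
    by (intro FF_mono H_le) simp
  have "(\<lambda>m. zeta_star (ks @ replicate m 2)) \<longlonglongrightarrow> infsum R (zs_index r)"
  proof (rule limit_combine[where a = "\<lambda>m N. FF ks (HH 2 m) N" and b = "\<lambda>N. FF ks (LL 2) N"])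
    fix m N
    show "FF ks (HH 2 m) N \<le> zeta_star (ks @ replicate m 2)"
      unfolding eqz suma[symmetric]
      by (rule G1(3)[where B = Bd]) (auto simp: Tm_nonneg suma intro: order_trans[OF ab bBd])
  next
    fix m
    show "zeta_star (ks @ replicate m 2) \<le> infsum R (zs_index r)"
      unfolding eqz
      by (rule G1(2)) (auto simp: Tm_nonneg suma intro: order_trans[OF ab ble])
  next
    show "(\<lambda>N. FF ks (LL 2) N) \<longlonglongrightarrow> infsum R (zs_index r)" by (rule blim)
  next
    fix N
    show "(\<lambda>m. FF ks (HH 2 m) N) \<longlonglongrightarrow> FF ks (LL 2) N"
    proof (cases "N = 0")
      case True then show ?thesis unfolding kks by simp
    next
      case False
      then show ?thesis by (intro FF_tendsto H_lim) auto
    qed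
  qed
  then show ?thesis unfolding R_def r_def .
qed

theorem corollary6p2:
  shows "(\<forall>ks::nat list. ks \<noteq> [] \<and> 2 \<le> hd ks \<and> (\<forall>k\<in>set ks. 1 \<le> k) \<longrightarrow>
           (\<lambda>m. zeta_star (ks @ replicate m 2)) \<longlonglongrightarrow>
             (\<Sum>\<^sub>\<infinity>ns\<in>zs_index (length ks).
                2 / ((\<Prod>i<length ks - 1. real (ns ! i) ^ (ks ! i))
                     * real (last ns) ^ (last ks - 1) * (real (last ns) + 1))))
       \<and> (\<forall>p::nat. 2 \<le> p \<longrightarrow>
           (\<lambda>m. zeta_star (replicate m p)) \<longlonglongrightarrow>
             (\<Prod>n. 1 / (1 - 1 / real (n + 2) ^ p)))"
  using part1 part2 by blast

end
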